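(* Let $(E,\tau)$ be a locally solid vector lattice such that $\tau$ is metrisable and complete. Then $\tau$ is locally interval complete solidly submetrisable.
   Context: All vector lattices are real and Archimedean; linear topologies are Hausdorff. A locally solid topology on a vector lattice is a linear topology such that zero has a neighbourhood basis of solid sets. For $x\in E$, $B_x$ denotes the band generated by $x$. A locally solid topology $\tau$ on $E$ is locally interval complete solidly submetrisable if for every $x\in E^+$ there exists a metrisable locally solid topology $\widetilde\tau_x$ on $B_x$ such that (a) $\tau|_{B_x}$ is finer than $\widetilde\tau_x$, and (b) every $\widetilde\tau_x$-Cauchy sequence in the order interval $[0,x]$ is $\widetilde\tau_x$-convergent to an element of $[0,x]$. *)

theory Defs
  imports "HOL-Analysis.Analysis"
begin

definition vabs :: "'a::{ordered_real_vector,lattice} \<Rightarrow> 'a" where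
  "vabs x = sup x (- x)"

definition archimedean_vl :: "'a::{ordered_real_vector,lattice} itself \<Rightarrow> bool" where
  "archimedean_vl _ \<longleftrightarrow>
     (\<forall>x y::'a. 0 \<le> x \<and> (\<forall>n::nat. real n *\<^sub>R x \<le> y) \<longrightarrow> x = 0)"

definition solid_in :: "'a::{ordered_real_vector,lattice} set \<Rightarrow> 'a set \<Rightarrow> bool" where
  "solid_in S V \<longleftrightarrow> V \<subseteq> S \<and> (\<forall>x\<in>V. \<forall>y\<in>S. vabs y \<le> vabs x \<longrightarrow> y \<in> V)"

definition ideal_vl :: "'a::{ordered_real_vector,lattice} set \<Rightarrow> bool" where
  "ideal_vl I \<longleftrightarrow> 0 \<in> I \<and> (\<forall>x\<in>I. \<forall>y\<in>I. x + y \<in> I) \<and> (\<forall>a. \<forall>x\<in>I. a *\<^sub>R x \<in> I)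
     \<and> (\<forall>x\<in>I. \<forall>y. vabs y \<le> vabs x \<longrightarrow> y \<in> I)"

definition is_sup_vl :: "'a::{ordered_real_vector,lattice} set \<Rightarrow> 'a \<Rightarrow> bool" where
  "is_sup_vl D s \<longleftrightarrow> (\<forall>d\<in>D. d \<le> s) \<and> (\<forall>z. (\<forall>d\<in>D. d \<le> z) \<longrightarrow> s \<le> z)"

definition band_vl :: "'a::{ordered_real_vector,lattice} set \<Rightarrow> bool" where
  "band_vl B \<longleftrightarrow> ideal_vl B \<and> (\<forall>D s. D \<subseteq> B \<and> is_sup_vl D s \<longrightarrow> s \<in> B)"

definition band_gen :: "'a::{ordered_real_vector,lattice} \<Rightarrow> 'a set" where
  "band_gen x = \<Inter>{B. band_vl B \<and> x \<in> B}"

definition linear_topology_on :: "'a::real_vector set \<Rightarrow> 'a topology \<Rightarrow> bool" where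
  "linear_topology_on S T \<longleftrightarrow> topspace T = S \<and> Hausdorff_space T
     \<and> continuous_map (prod_topology T T) T (\<lambda>(x, y). x + y)
     \<and> continuous_map (prod_topology euclideanreal T) T (\<lambda>(a, x). a *\<^sub>R x)"

definition locally_solid_on :: "'a::{ordered_real_vector,lattice} set \<Rightarrow> 'a topology \<Rightarrow> bool" where
  "locally_solid_on S T \<longleftrightarrow> linear_topology_on S T \<and>
     (\<forall>U. (\<exists>W. openin T W \<and> 0 \<in> W \<and> W \<subseteq> U) \<longrightarrow>
        (\<exists>V. solid_in S V \<and> V \<subseteq> U \<and> (\<exists>W. openin T W \<and> 0 \<in> W \<and> W \<subseteq> V)))"

definition tvs_cauchy :: "'a::real_vector topology \<Rightarrow> (nat \<Rightarrow> 'a) \<Rightarrow> bool" where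
  "tvs_cauchy T f \<longleftrightarrow> (\<forall>n. f n \<in> topspace T) \<and>
     (\<forall>U. openin T U \<and> 0 \<in> U \<longrightarrow> (\<exists>N. \<forall>m n. N \<le> m \<and> N \<le> n \<longrightarrow> f m - f n \<in> U))"

definition tvs_complete :: "'a::real_vector topology \<Rightarrow> bool" where
  "tvs_complete T \<longleftrightarrow> (\<forall>f. tvs_cauchy T f \<longrightarrow> (\<exists>l. limitin T f l sequentially))"

definition lics_submetrisable :: "'a::{ordered_real_vector,lattice} topology \<Rightarrow> bool" where
  "lics_submetrisable T \<longleftrightarrow>
     (\<forall>x::'a. 0 \<le> x \<longrightarrow>
        (\<exists>Tx. locally_solid_on (band_gen x) Tx \<and> metrizable_space Tx
           \<and> (\<forall>U. openin Tx U \<longrightarrow> openin (subtopology T (band_gen x)) U)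
           \<and> (\<forall>f. (\<forall>n. f n \<in> {0..x}) \<and> tvs_cauchy Tx f \<longrightarrow>
                 (\<exists>l\<in>{0..x}. limitin Tx f l sequentially))))"

end

theory Submission
  imports Defs
begin

lemma vabs_nonneg_self:
  fixes y :: "'a::{ordered_real_vector,lattice}"
  assumes "0 \<le> y" shows "vabs y = y"
proof -
  have "- y \<le> y" using assms by (meson neg_le_0_iff_le order_trans)
  then show ?thesis unfolding vabs_def by (simp add: sup_absorb1)
qed

lemma vabs_ge0:
  fixes d :: "'a::{ordered_real_vector,lattice}"
  shows "0 \<le> vabs d"
proof -
  let ?s = "sup d (- d)"
  have "d + (- d) \<le> ?s + ?s" by (intro add_mono) auto
  hence "0 \<le> ?s + ?s" by simp
  hence "0 \<le> (1/2::real) *\<^sub>R (?s + ?s)" using scaleR_left_mono[of 0 "?s + ?s" "1/2"] by simp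
  also have "(1/2::real) *\<^sub>R (?s + ?s) = ?s"
    by (simp add: scaleR_add_right flip: scaleR_add_left)
  finally show ?thesis unfolding vabs_def .
qed

lemma ge_vabs: fixes d :: "'a::{ordered_real_vector,lattice}"
  shows "d \<le> vabs d" "- d \<le> vabs d" unfolding vabs_def by auto

lemma band_gen_ideal: "ideal_vl (band_gen x)"
  unfolding ideal_vl_def band_gen_def band_vl_def by blast

lemma band_gen_mem: "x \<in> band_gen x"
  unfolding band_gen_def by blast

lemma ls_zero:
  fixes T :: "'a::{ordered_real_vector,lattice} topology"
  assumes ls: "locally_solid_on UNIV T"
    and z: "0 \<le> z"
    and H: "\<And>W. openin T W \<Longrightarrow> 0 \<in> W \<Longrightarrow> \<exists>w\<in>W. z \<le> vabs w"
  shows "z = 0"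
proof (rule ccontr)
  assume nz: "z \<noteq> 0"
  have lt: "linear_topology_on UNIV T" using ls unfolding locally_solid_on_def by blast
  hence "Hausdorff_space T" "topspace T = UNIV" unfolding linear_topology_on_def by auto
  then obtain U V where UV: "openin T U" "openin T V" "0 \<in> U" "z \<in> V" "disjnt U V"
    using nz unfolding Hausdorff_space_def by (metis UNIV_I)
  then obtain S where S: "solid_in UNIV S" "S \<subseteq> U" "\<exists>W. openin T W \<and> 0 \<in> W \<and> W \<subseteq> S"
    using ls unfolding locally_solid_on_def by (metis order_refl)
  then obtain W where W: "openin T W" "0 \<in> W" "W \<subseteq> S" by blast
  then obtain w where w: "w \<in> W" "z \<le> vabs w" using H by blast
  have "vabs z \<le> vabs w" using w z vabs_nonneg_self by metis
  hence "z \<in> S" using S(1) w W unfolding solid_in_def by blast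
  thus False using S UV unfolding disjnt_def by blast
qed

lemma translate_open:
  fixes T :: "'a::{ordered_real_vector,lattice} topology"
  assumes ls: "locally_solid_on UNIV T" and W: "openin T W"
  shows "openin T {y. y - l \<in> W}"
proof -
  have lt: "linear_topology_on UNIV T" using ls unfolding locally_solid_on_def by blast
  hence ts: "topspace T = UNIV" and add: "continuous_map (prod_topology T T) T (\<lambda>(x, y). x + y)"
    unfolding linear_topology_on_def by auto
  have "continuous_map T (prod_topology T T) (\<lambda>y. (y, - l))"
    by (simp add: continuous_map_pairwise o_def ts)
  hence "continuous_map T T ((\<lambda>(x, y). x + y) \<circ> (\<lambda>y. (y, - l)))"
    using continuous_map_compose[OF _ add] by blast
  hence "continuous_map T T (\<lambda>y. y - l)" by (simp add: o_def)
  then show ?thesis using W ts by (simp add: continuous_map_def)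
qed

lemma limit_bounds:
  fixes T :: "'a::{ordered_real_vector,lattice} topology"
  assumes ls: "locally_solid_on UNIV T" and lim: "limitin T f l sequentially"
  shows "(\<forall>n. a \<le> f n) \<Longrightarrow> a \<le> l" and "(\<forall>n. f n \<le> b) \<Longrightarrow> l \<le> b"
proof -
  have ev: "\<exists>n. f n - l \<in> W" if "openin T W" "0 \<in> W" for W
  proof -
    have "openin T {y. y - l \<in> W}" using translate_open[OF ls that(1)] .
    moreover have "l \<in> {y. y - l \<in> W}" using that by simp
    ultimately have "eventually (\<lambda>n. f n \<in> {y. y - l \<in> W}) sequentially"
      using lim unfolding limitin_def by blast
    thus ?thesis by (metis (mono_tags) eventually_sequentially mem_Collect_eq order_refl)
  qed
  show "a \<le> l" if A: "\<forall>n. a \<le> f n"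
  proof -
    have "sup (a - l) 0 = 0"
    proof (rule ls_zero[OF ls])
      fix W assume "openin T W" "0 \<in> W"
      then obtain n where n: "f n - l \<in> W" using ev by blast
      have "a - l \<le> f n - l" using A by (simp add: diff_right_mono)
      hence "sup (a - l) 0 \<le> vabs (f n - l)" using ge_vabs vabs_ge0 by (metis le_sup_iff order_trans)
      thus "\<exists>w\<in>W. sup (a - l) 0 \<le> vabs w" using n by blast
    qed simp
    thus ?thesis by (metis diff_le_0_iff_le sup.cobounded1)
  qed
  show "l \<le> b" if B: "\<forall>n. f n \<le> b"
  proof -
    have "sup (l - b) 0 = 0"
    proof (rule ls_zero[OF ls])
      fix W assume "openin T W" "0 \<in> W"
      then obtain n where n: "f n - l \<in> W" using ev by blast
      have "l - b \<le> - (f n - l)" using B by (simp add: diff_left_mono)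
      hence "sup (l - b) 0 \<le> vabs (f n - l)" using ge_vabs vabs_ge0 by (metis le_sup_iff order_trans)
      thus "\<exists>w\<in>W. sup (l - b) 0 \<le> vabs w" using n by blast
    qed simp
    thus ?thesis by (metis diff_le_0_iff_le sup.cobounded1)
  qed
qed


theorem proposition3p8:
  fixes T :: "'a::{ordered_real_vector,lattice} topology"
  assumes "archimedean_vl TYPE('a)"
    and "locally_solid_on UNIV T"
    and "metrizable_space T"
    and "tvs_complete T"
  shows "lics_submetrisable T"
  unfolding lics_submetrisable_def
proof (intro allI impI)
  fix x :: 'a assume x0: "0 \<le> x"
  define B where "B = band_gen x"
  define Tx where "Tx = subtopology T B"
  have ls: "locally_solid_on UNIV T" by fact
  have lt: "linear_topology_on UNIV T" using ls unfolding locally_solid_on_def by blast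
  hence ts: "topspace T = UNIV" and add: "continuous_map (prod_topology T T) T (\<lambda>(x, y). x + y)"
    and sc: "continuous_map (prod_topology euclideanreal T) T (\<lambda>(a, x). a *\<^sub>R x)"
    and hs: "Hausdorff_space T"
    unfolding linear_topology_on_def by auto
  have I: "ideal_vl B" unfolding B_def by (rule band_gen_ideal)
  have xB: "x \<in> B" unfolding B_def by (rule band_gen_mem)
  have tsx: "topspace Tx = B" unfolding Tx_def by (simp add: ts)
  have addc: "continuous_map (prod_topology Tx Tx) Tx (\<lambda>(x, y). x + y)"
  proof -
    have "continuous_map (subtopology (prod_topology T T) (B \<times> B)) T (\<lambda>(x, y). x + y)"
      using add by (rule continuous_map_from_subtopology)
    moreover have "(\<lambda>(x, y). x + y) \<in> topspace (subtopology (prod_topology T T) (B \<times> B)) \<rightarrow> B"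
      using I unfolding ideal_vl_def by (auto simp: ts)
    ultimately show ?thesis unfolding Tx_def
      by (simp add: continuous_map_in_subtopology subtopology_Times[symmetric])
  qed
  have scc: "continuous_map (prod_topology euclideanreal Tx) Tx (\<lambda>(a, x). a *\<^sub>R x)"
  proof -
    have c1: "continuous_map (subtopology (prod_topology euclideanreal T) (UNIV \<times> B)) T (\<lambda>(a, x). a *\<^sub>R x)"
      using sc by (rule continuous_map_from_subtopology)
    have c2: "(\<lambda>(a, x). a *\<^sub>R x) \<in> topspace (subtopology (prod_topology euclideanreal T) (UNIV \<times> B)) \<rightarrow> B"
      using I unfolding ideal_vl_def by (auto simp: ts)
    show ?thesis
    proof -
      have e: "prod_topology euclideanreal (subtopology T B) = subtopology (prod_topology euclideanreal T) (UNIV \<times> B)"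
        using prod_topology_subtopology(2)[of euclideanreal T B] by (simp only: topspace_euclidean)
      show ?thesis unfolding Tx_def e continuous_map_in_subtopology using c1 c2 by (intro conjI)
    qed
  qed
  have hx: "Hausdorff_space Tx" unfolding Tx_def using hs by (rule Hausdorff_space_subtopology)
  have ltx: "linear_topology_on B Tx" unfolding linear_topology_on_def
    using tsx hx addc scc by (intro conjI)
  have solid: "\<exists>V. solid_in B V \<and> V \<subseteq> U \<and> (\<exists>W. openin Tx W \<and> 0 \<in> W \<and> W \<subseteq> V)"
    if hU: "\<exists>W. openin Tx W \<and> 0 \<in> W \<and> W \<subseteq> U" for U
  proof -
    obtain W where W: "openin Tx W" "0 \<in> W" "W \<subseteq> U" using hU by blast
    then obtain W' where W': "openin T W'" "W = W' \<inter> B" unfolding Tx_def openin_subtopology by auto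
    have "\<exists>W. openin T W \<and> 0 \<in> W \<and> W \<subseteq> W'" using W W' by blast
    then obtain V' where V': "solid_in UNIV V'" "V' \<subseteq> W'" "\<exists>W. openin T W \<and> 0 \<in> W \<and> W \<subseteq> V'"
      using ls unfolding locally_solid_on_def by (meson)
    then obtain W'' where W'': "openin T W''" "0 \<in> W''" "W'' \<subseteq> V'" by blast
    have "solid_in B (V' \<inter> B)" using V'(1) unfolding solid_in_def by blast
    moreover have "V' \<inter> B \<subseteq> U" using V' W W' by blast
    moreover have "openin Tx (W'' \<inter> B)" unfolding Tx_def openin_subtopology using W'' by blast
    moreover have "0 \<in> W'' \<inter> B" using W'' I unfolding ideal_vl_def by blast
    ultimately show ?thesis using W'' by blast
  qed
  have "locally_solid_on B Tx" unfolding locally_solid_on_def using ltx solid by blast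
  moreover have "metrizable_space Tx" unfolding Tx_def using assms(3) by (rule metrizable_space_subtopology)
  moreover have "\<forall>U. openin Tx U \<longrightarrow> openin (subtopology T B) U" unfolding Tx_def by blast
  moreover have "\<exists>l\<in>{0..x}. limitin Tx f l sequentially"
    if f: "\<forall>n. f n \<in> {0..x}" and cf: "tvs_cauchy Tx f" for f
  proof -
    have fB: "f n \<in> B" for n
    proof -
      have "vabs (f n) \<le> vabs x" using f x0 by (simp add: vabs_nonneg_self)
      thus ?thesis using I xB unfolding ideal_vl_def by blast
    qed
    have "tvs_cauchy T f" unfolding tvs_cauchy_def
    proof (intro conjI allI impI)
      fix n show "f n \<in> topspace T" by (simp add: ts)
    next
      fix U assume U: "openin T U \<and> 0 \<in> U"
      hence "openin Tx (U \<inter> B) \<and> 0 \<in> U \<inter> B" unfolding Tx_def openin_subtopology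
        using I unfolding ideal_vl_def by blast
      then obtain N where "\<forall>m n. N \<le> m \<and> N \<le> n \<longrightarrow> f m - f n \<in> U \<inter> B"
        using cf[unfolded tvs_cauchy_def, THEN conjunct2, rule_format] by presburger
      then show "\<exists>N. \<forall>m n. N \<le> m \<and> N \<le> n \<longrightarrow> f m - f n \<in> U"
        by blast
    qed
    then obtain l where l: "limitin T f l sequentially" using assms(4) unfolding tvs_complete_def by blast
    have l0: "0 \<le> l" using limit_bounds(1)[OF ls l] f by simp
    have lx: "l \<le> x" using limit_bounds(2)[OF ls l] f by simp
    have lB: "l \<in> B"
    proof -
      have "vabs l \<le> vabs x" using l0 lx x0 by (simp add: vabs_nonneg_self)
      thus ?thesis using I xB unfolding ideal_vl_def by blast
    qed
    have "limitin Tx f l sequentially" unfolding Tx_def limitin_subtopology using lB fB l by simp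
    thus ?thesis using l0 lx by auto
  qed
  ultimately show "\<exists>Tx. locally_solid_on (band_gen x) Tx \<and> metrizable_space Tx
           \<and> (\<forall>U. openin Tx U \<longrightarrow> openin (subtopology T (band_gen x)) U)
           \<and> (\<forall>f. (\<forall>n. f n \<in> {0..x}) \<and> tvs_cauchy Tx f \<longrightarrow>
                 (\<exists>l\<in>{0..x}. limitin Tx f l sequentially))" unfolding B_def[symmetric]
    by (intro exI[of _ Tx] conjI) blast+
qed

end
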